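(* Let $X$ be a linearly ordered set and let $k,n\ge1$ be odd natural numbers with $k\le\sqrt n$. Then $\mathrm{med}_k\in\langle\{\mathrm{med}_n\}\rangle$.
   Context: A clone on $X$ is a set of finitary operations on $X$ containing all projections and closed under composition; $\langle\mathscr F\rangle$ is the smallest clone containing $\mathscr F$. For odd $n$, $\mathrm{med}_n(x_1,\dots,x_n)$ is the $\frac{n+1}{2}$-th smallest entry of $(x_1,\dots,x_n)$ (counted with multiplicity) with respect to the linear order of $X$. *)

theory Defs
  imports Complex_Main
begin

text \<open>A finitary operation on the type 'a is represented as a pair (n, f) where
  n is its arity and f :: 'a list \<Rightarrow> 'a is meant to be applied to lists of
  length n only (its values on other lists are irrelevant).\<close>

type_synonym 'a op = "nat \<times> ('a list \<Rightarrow> 'a)"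

definition is_clone :: "'a op set \<Rightarrow> bool" where
  "is_clone C \<longleftrightarrow>
     (\<forall>n i. i < n \<longrightarrow> (n, \<lambda>xs. xs ! i) \<in> C) \<and>
     (\<forall>n m f gs. (n, f) \<in> C \<longrightarrow> length gs = n \<longrightarrow> (\<forall>g\<in>set gs. (m, g) \<in> C)
        \<longrightarrow> (m, \<lambda>xs. f (map (\<lambda>g. g xs) gs)) \<in> C) \<and>
     (\<forall>n f g. (n, f) \<in> C \<longrightarrow> (\<forall>xs. length xs = n \<longrightarrow> f xs = g xs) \<longrightarrow> (n, g) \<in> C)"

definition clone_gen :: "'a op set \<Rightarrow> 'a op set" where
  "clone_gen F = \<Inter>{C. is_clone C \<and> F \<subseteq> C}"

definition med :: "'a::linorder list \<Rightarrow> 'a" where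
  "med xs = sort xs ! (length xs div 2)"

end

theory Submission
  imports Defs
begin

lemma len_filter_sort: "length (filter P (sort ys)) = length (filter P ys)"
  by (metis filter_sort length_sort)

lemma med_eq:
  fixes ys :: "'a::linorder list"
  assumes o: "odd (length ys)"
    and lt: "length (filter (\<lambda>y. y < m) ys) \<le> length ys div 2"
    and gt: "length (filter (\<lambda>y. m < y) ys) \<le> length ys div 2"
  shows "med ys = m"
proof -
  define s where "s = sort ys"
  define L where "L = length ys"
  define i where "i = L div 2"
  have ls: "length s = L" unfolding s_def L_def by simp
  have so: "sorted s" unfolding s_def by simp
  have iL: "i < L" using o unfolding i_def L_def by (cases "length ys") auto
  have c1: "length (filter (\<lambda>y. y < m) s) \<le> i" using lt len_filter_sort unfolding s_def i_def L_def by metis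
  have c2: "length (filter (\<lambda>y. m < y) s) \<le> i" using gt len_filter_sort unfolding s_def i_def L_def by metis
  have "\<not> s ! i < m"
  proof
    assume a: "s ! i < m"
    have "{0..i} \<subseteq> {j. j < length s \<and> s ! j < m}"
      using a iL ls so by (auto intro: le_less_trans[OF sorted_nth_mono])
    hence "card {0..i} \<le> card {j. j < length s \<and> s ! j < m}" by (intro card_mono) auto
    thus False using c1 by (simp add: length_filter_conv_card)
  qed
  moreover have "\<not> m < s ! i"
  proof
    assume a: "m < s ! i"
    have "{i..<L} \<subseteq> {j. j < length s \<and> m < s ! j}"
      using a iL ls so by (auto intro: less_le_trans[OF _ sorted_nth_mono])
    hence "card {i..<L} \<le> card {j. j < length s \<and> m < s ! j}" by (intro card_mono) auto
    moreover have "card {i..<L} > i" using o unfolding i_def L_def by (auto elim!: oddE)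
    ultimately show False using c2 by (simp add: length_filter_conv_card)
  qed
  ultimately show ?thesis unfolding med_def s_def L_def i_def by auto
qed

lemma med_props:
  fixes ys :: "'a::linorder list"
  assumes o: "odd (length ys)"
  shows "length (filter (\<lambda>y. y < med ys) ys) \<le> length ys div 2"
    "length (filter (\<lambda>y. med ys < y) ys) \<le> length ys div 2"
proof -
  define s where "s = sort ys"
  define L where "L = length ys"
  define i where "i = L div 2"
  have ls: "length s = L" unfolding s_def L_def by simp
  have so: "sorted s" unfolding s_def by simp
  have m: "med ys = s ! i" unfolding med_def s_def i_def L_def by simp
  have "{j. j < length s \<and> s ! j < s ! i} \<subseteq> {0..<i}"
  proof (safe)
    fix j assume "j < length s" "s ! j < s ! i"
    thus "j \<in> {0..<i}" using sorted_nth_mono[OF so, of i j] by (cases "i \<le> j") auto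
  qed
  hence "card {j. j < length s \<and> s ! j < s ! i} \<le> i"
    by (metis card_atLeastLessThan card_mono diff_zero finite_atLeastLessThan)
  moreover have "length (filter (\<lambda>y. y < med ys) ys) = card {j. j < length s \<and> s ! j < s ! i}"
    unfolding m len_filter_sort[symmetric, of _ ys] s_def[symmetric] by (rule length_filter_conv_card)
  ultimately show "length (filter (\<lambda>y. y < med ys) ys) \<le> length ys div 2"
    unfolding i_def L_def by simp
  have "{j. j < length s \<and> s ! i < s ! j} \<subseteq> {i<..<L}"
  proof (safe)
    fix j assume "j < length s" "s ! i < s ! j"
    thus "j \<in> {i<..<L}" 
    proof (cases "j \<le> i")
      case True
      have "i < L" using o unfolding i_def L_def by (auto elim!: oddE)
      hence "s ! j \<le> s ! i" using sorted_nth_mono[OF so True] ls by simp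
      thus ?thesis using \<open>s ! i < s ! j\<close> by simp
    next
      case False
      thus ?thesis using \<open>j < length s\<close> ls by simp
    qed
  qed
  hence "card {j. j < length s \<and> s ! i < s ! j} \<le> card {i<..<L}"
    by (intro card_mono) auto
  moreover have "card {i<..<L} \<le> i" using o unfolding i_def L_def by (auto elim!: oddE)
  moreover have "length (filter (\<lambda>y. med ys < y) ys) = card {j. j < length s \<and> s ! i < s ! j}"
    unfolding m len_filter_sort[symmetric, of _ ys] s_def[symmetric] by (rule length_filter_conv_card)
  ultimately show "length (filter (\<lambda>y. med ys < y) ys) \<le> length ys div 2"
    unfolding i_def L_def by simp
qed
lemma len_filter_rep: "length (filter P (concat (replicate q xs))) = q * length (filter P xs)"
  by (induction q) auto

lemma arith_aux:
  fixes q r c k :: nat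
  assumes "r < q" "odd k" "c \<le> k div 2"
  shows "r + q * c \<le> (r + q * k) div 2"
proof -
  obtain a where a: "k = 2 * a + 1" using assms(2) oddE by blast
  have "c \<le> a" using assms(3) a by simp
  hence "q * c \<le> q * a" by simp
  moreover have "q * k = 2 * (q * a) + q" using a by (simp add: algebra_simps)
  ultimately show ?thesis using assms(1) by linarith
qed

lemma med_weighted:
  fixes xs :: "'a::linorder list"
  assumes "length xs = k" "odd k" "r < q" "odd (r + q * k)"
  shows "med (replicate r (xs ! 0) @ concat (replicate q xs)) = med xs"
proof -
  define ys where "ys = replicate r (xs ! 0) @ concat (replicate q xs)"
  have ly: "length ys = r + q * k" unfolding ys_def using assms(1) by (simp add: length_concat sum_list_replicate)
  have oy: "odd (length ys)" unfolding ly using assms(4) .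
  have bnd: "length (filter P ys) \<le> r + q * length (filter P xs)" for P
    unfolding ys_def using length_filter_le[of P "replicate r (xs ! 0)"] by (simp add: len_filter_rep)
  have "med ys = med xs"
  proof (rule med_eq[OF oy])
    show "length (filter (\<lambda>y. y < med xs) ys) \<le> length ys div 2"
      using bnd[of "\<lambda>y. y < med xs"] med_props(1)[of xs] assms arith_aux[of r q k]
      unfolding ly by (meson order_trans)
    show "length (filter (\<lambda>y. med xs < y) ys) \<le> length ys div 2"
      using bnd[of "\<lambda>y. med xs < y"] med_props(2)[of xs] assms arith_aux[of r q k]
      unfolding ly by (meson order_trans)
  qed
  thus ?thesis unfolding ys_def .
qed

theorem mainTheorem3:
  fixes k n :: nat
  assumes "odd k" "odd n" "k \<ge> 1" "n \<ge> 1" "real k \<le> sqrt (real n)"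
  shows "(k, med :: 'a::linorder list \<Rightarrow> 'a) \<in> clone_gen {(n, med)}"
  unfolding clone_gen_def
proof (rule InterI)
  fix C :: "'a op set"
  assume "C \<in> {C. is_clone C \<and> {(n, med)} \<subseteq> C}"
  hence cl: "is_clone C" and mC: "(n, med) \<in> C" by auto
  define q where "q = n div k"
  define r where "r = n mod k"
  have k0: "0 < k" using assms(3) by simp
  have "real k ^ 2 \<le> sqrt (real n) ^ 2" using assms(5) by (intro power_mono) auto
  hence "real (k * k) \<le> real n" by (simp add: power2_eq_square)
  hence kk: "k * k \<le> n" by linarith
  have "k \<le> q" unfolding q_def using div_le_mono[OF kk, of k] k0 by simp
  moreover have "r < k" unfolding r_def using k0 by simp
  ultimately have rq: "r < q" by simp
  have nrq: "n = r + q * k" unfolding q_def r_def by simp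
  define gs :: "('a list \<Rightarrow> 'a) list" where
    "gs = replicate r (\<lambda>xs. xs ! 0) @ concat (replicate q (map (\<lambda>i xs. xs ! i) [0..<k]))"
  have lg: "length gs = n" unfolding gs_def nrq by (simp add: length_concat sum_list_replicate)
  have proj: "\<And>i. i < k \<Longrightarrow> (k, \<lambda>xs. xs ! i) \<in> C" using cl unfolding is_clone_def by blast
  have gC: "\<forall>g\<in>set gs. (k, g) \<in> C"
    unfolding gs_def using proj k0 by (auto split: if_splits)
  have comp: "(k, \<lambda>xs. med (map (\<lambda>g. g xs) gs)) \<in> C"
    using cl mC lg gC unfolding is_clone_def by blast
  have eq: "med (map (\<lambda>g. g xs) gs) = med xs" if "length xs = k" for xs :: "'a list"
  proof -
    have "map (\<lambda>i. xs ! i) [0..<k] = xs" using that map_nth by metis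
    hence "map (\<lambda>g. g xs) gs = replicate r (xs ! 0) @ concat (replicate q xs)"
      unfolding gs_def by (simp add: map_concat o_def)
    thus ?thesis using med_weighted[OF that assms(1) rq] assms(2) nrq by simp
  qed
  show "(k, med) \<in> C"
    using cl comp eq unfolding is_clone_def by blast
qed

end
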